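(* Let $\mu\in M(\mathbb{R}^{2d})$ and $\varphi\in M^1(\mathbb{R}^d)$ be such that $B_\mu^\varphi$ is not the zero operator. Then $B_\mu^\varphi$ is not a compact operator on $L^2(\mathbb{R}^d)$.
   Context: $M(\mathbb{R}^{2d})$ is the space of complex finite Borel measures on $\mathbb{R}^{2d}$ with total variation norm, and $\mu*F(z)=\int F(z-w)d\mu(w)$. For $x,\omega\in\mathbb{R}^d$ let $\pi(x,\omega)f(t)=e^{2\pi i\omega\cdot t}f(t-x)$. The STFT is $V_\varphi\psi(x,\omega)=\langle\psi,\pi(x,\omega)\varphi\rangle=\int\psi(t)\overline{\varphi(t-x)}e^{-2\pi i\omega\cdot t}dt$, the synthesis is $V_\varphi^*F=\int_{\mathbb{R}^{2d}}F(z)\pi(z)\varphi\,dz$ (weakly), and $B_\mu^\varphi\psi=V_\varphi^*(\mu*V_\varphi\psi)$, a bounded operator on $L^2(\mathbb{R}^d)$. $M^1(\mathbb{R}^d)$ (Feichtinger's algebra) is the set of tempered distributions $\psi$ with $\Vert V_g\psi\Vert_{L^1(\mathbb{R}^{2d})}<\infty$ for a fixed nonzero Schwartz window $g$. *)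

theory Defs
  imports "HOL-Analysis.Analysis"
begin

text \<open>R^d is modelled by an arbitrary Euclidean space 'd, R^{2d} by 'd \<times> 'd
  (points z = (x, \<omega>)).  L^2 functions are Borel square-integrable functions
  (every L^2 class has a Borel representative).\<close>

definition L2 :: "('d::euclidean_space \<Rightarrow> complex) \<Rightarrow> bool" where
  "L2 f \<longleftrightarrow> f \<in> borel_measurable lborel \<and> integrable lborel (\<lambda>t. (cmod (f t))\<^sup>2)"

definition l2inner :: "('d::euclidean_space \<Rightarrow> complex) \<Rightarrow> ('d \<Rightarrow> complex) \<Rightarrow> complex" where
  "l2inner f h = (LINT t|lborel. f t * cnj (h t))"

definition l2norm :: "('d::euclidean_space \<Rightarrow> complex) \<Rightarrow> real" where
  "l2norm f = sqrt (LINT t|lborel. (cmod (f t))\<^sup>2)"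

definition tfshift :: "'d::euclidean_space \<times> 'd \<Rightarrow> ('d \<Rightarrow> complex) \<Rightarrow> 'd \<Rightarrow> complex" where
  "tfshift z f t = cis (2 * pi * (snd z \<bullet> t)) * f (t - fst z)"

definition stft :: "('d::euclidean_space \<Rightarrow> complex) \<Rightarrow> ('d \<Rightarrow> complex) \<Rightarrow> 'd \<times> 'd \<Rightarrow> complex" where
  "stft \<phi> \<psi> z = (LINT t|lborel. \<psi> t * cnj (\<phi> (t - fst z)) * cis (- 2 * pi * (snd z \<bullet> t)))"

text \<open>A complex finite Borel measure on R^{2d} is represented by four finite positive
  Borel measures M 0, ..., M 3 via mu = M 0 + i M 1 - M 2 - i M 3 (every complex
  measure has such a Jordan-type decomposition, and every such combination is one).\<close>
definition cmeasure :: "(nat \<Rightarrow> ('d::euclidean_space \<times> 'd) measure) \<Rightarrow> bool" where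
  "cmeasure M \<longleftrightarrow> (\<forall>k<4. finite_measure (M k) \<and> sets (M k) = sets borel)"

definition mconv :: "(nat \<Rightarrow> ('d::euclidean_space \<times> 'd) measure) \<Rightarrow> ('d \<times> 'd \<Rightarrow> complex) \<Rightarrow> 'd \<times> 'd \<Rightarrow> complex" where
  "mconv M F z = (\<Sum>k<4. \<i> ^ k * (\<integral>w. F (z - w) \<partial>(M k)))"

text \<open>T is the operator B_mu^phi = V_phi^*(mu * V_phi psi), with the synthesis
  operator understood weakly: <B psi, f> = int (mu * V_phi psi)(z) <pi(z) phi, f> dz.\<close>
definition is_Bmu :: "(nat \<Rightarrow> ('d::euclidean_space \<times> 'd) measure) \<Rightarrow> ('d \<Rightarrow> complex)
    \<Rightarrow> (('d \<Rightarrow> complex) \<Rightarrow> ('d \<Rightarrow> complex)) \<Rightarrow> bool" where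
  "is_Bmu M \<phi> T \<longleftrightarrow> (\<forall>\<psi>. L2 \<psi> \<longrightarrow> L2 (T \<psi>) \<and>
     (\<forall>f. L2 f \<longrightarrow> l2inner (T \<psi>) f =
        (LINT z|lborel. mconv M (stft \<phi> \<psi>) z * l2inner (tfshift z \<phi>) f)))"

definition gauss :: "'d::euclidean_space \<Rightarrow> complex" where
  "gauss t = complex_of_real (exp (- pi * (norm t)\<^sup>2))"

definition M1 :: "('d::euclidean_space \<Rightarrow> complex) \<Rightarrow> bool" where
  "M1 \<psi> \<longleftrightarrow> L2 \<psi> \<and> integrable lborel (stft gauss \<psi>)"

definition compact_op :: "(('d::euclidean_space \<Rightarrow> complex) \<Rightarrow> ('d \<Rightarrow> complex)) \<Rightarrow> bool" where
  "compact_op T \<longleftrightarrow> (\<forall>\<psi>s::nat \<Rightarrow> 'd \<Rightarrow> complex. (\<forall>n. L2 (\<psi>s n)) \<and> bounded (range (\<lambda>n. l2norm (\<psi>s n))) \<longrightarrow>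
     (\<exists>r h. strict_mono r \<and> L2 h \<and>
        (\<lambda>n. l2norm (\<lambda>t. T (\<psi>s (r n)) t - h t)) \<longlonglongrightarrow> 0))"

end

theory Submission
  imports Defs
begin

lemma cis_measurable[measurable (raw)]:
  "f \<in> borel_measurable M \<Longrightarrow> (\<lambda>x. cis (f x)) \<in> borel_measurable M"
  using measurable_compose[of f M borel cis borel]
  by (simp add: borel_measurable_continuous_onI continuous_on_cis continuous_on_id)

lemma cnj_measurable[measurable (raw)]:
  "f \<in> borel_measurable M \<Longrightarrow> (\<lambda>x. cnj (f x :: complex)) \<in> borel_measurable M"
  using measurable_compose[of f M borel cnj borel]
  by (simp add: borel_measurable_continuous_onI continuous_on_cnj continuous_on_id)

lemma cs_real:
  fixes u v :: "'a \<Rightarrow> real"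
  assumes [measurable]: "u \<in> borel_measurable M" "v \<in> borel_measurable M"
    and iu: "integrable M (\<lambda>x. (u x)\<^sup>2)" and iv: "integrable M (\<lambda>x. (v x)\<^sup>2)"
    and nu: "\<And>x. u x \<ge> 0" and nv: "\<And>x. v x \<ge> 0"
  shows "integrable M (\<lambda>x. u x * v x)"
    and "(\<integral>x. u x * v x \<partial>M) \<le> sqrt (\<integral>x. (u x)\<^sup>2 \<partial>M) * sqrt (\<integral>x. (v x)\<^sup>2 \<partial>M)"
proof -
  show iuv: "integrable M (\<lambda>x. u x * v x)"
  proof (rule Bochner_Integration.integrable_bound[OF Bochner_Integration.integrable_add[OF iu iv]])
    show "AE x in M. norm (u x * v x) \<le> norm ((u x)\<^sup>2 + (v x)\<^sup>2)"
    proof (rule AE_I2)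
      fix x
      have "0 \<le> u x * v x" using nu[of x] nv[of x] by simp
      moreover have "2 * u x * v x \<le> (u x)\<^sup>2 + (v x)\<^sup>2" by (rule sum_squares_bound)
      ultimately have "u x * v x \<le> (u x)\<^sup>2 + (v x)\<^sup>2" by linarith
      then show "norm (u x * v x) \<le> norm ((u x)\<^sup>2 + (v x)\<^sup>2)"
        using nu[of x] nv[of x] by simp
    qed
  qed simp
  define A where "A = (\<integral>x. (u x)\<^sup>2 \<partial>M)"
  define B where "B = (\<integral>x. (v x)\<^sup>2 \<partial>M)"
  define C where "C = (\<integral>x. u x * v x \<partial>M)"
  have A0: "A \<ge> 0" unfolding A_def by simp
  have B0: "B \<ge> 0" unfolding B_def by simp
  have C0: "C \<ge> 0" unfolding C_def using nu nv by simp
  have q: "0 \<le> l\<^sup>2 * A - 2 * l * C + B" for l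
  proof -
    have "0 \<le> (\<integral>x. (l * u x - v x)\<^sup>2 \<partial>M)" by simp
    also have "\<dots> = (\<integral>x. l\<^sup>2 * (u x)\<^sup>2 - 2 * l * (u x * v x) + (v x)\<^sup>2 \<partial>M)"
      by (rule Bochner_Integration.integral_cong) (simp_all add: power2_diff power_mult_distrib)
    also have "\<dots> = l\<^sup>2 * A - 2 * l * C + B"
      using iu iv iuv by (simp add: A_def B_def C_def)
    finally show ?thesis .
  qed
  have "C\<^sup>2 \<le> A * B"
  proof (cases "A > 0")
    case True
    have "0 \<le> (C/A)\<^sup>2 * A - 2 * (C/A) * C + B" by (rule q)
    have "(C/A)\<^sup>2 * A - 2 * (C/A) * C + B = (A * B - C\<^sup>2) / A" using True by (simp add: field_simps power2_eq_square)
    with \<open>0 \<le> (C/A)\<^sup>2 * A - 2 * (C/A) * C + B\<close> have "0 \<le> (A * B - C\<^sup>2) / A" by simp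
    then show ?thesis using True by (simp add: zero_le_divide_iff)
  next
    case False
    then have "A = 0" using A0 by simp
    have "C = 0"
    proof (rule ccontr)
      assume "C \<noteq> 0" then have "C > 0" using C0 by simp
      have "0 \<le> ((B+1)/(2*C))\<^sup>2 * A - 2 * ((B+1)/(2*C)) * C + B" by (rule q)
      then show False using \<open>A = 0\<close> \<open>C > 0\<close> by (simp add: field_simps)
    qed
    then show ?thesis using \<open>A = 0\<close> by simp
  qed
  then have "C \<le> sqrt (A * B)" using C0 by (simp add: real_le_rsqrt)
  then show "(\<integral>x. u x * v x \<partial>M) \<le> sqrt (\<integral>x. (u x)\<^sup>2 \<partial>M) * sqrt (\<integral>x. (v x)\<^sup>2 \<partial>M)"
    by (simp add: A_def B_def C_def real_sqrt_mult)
qed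

lemma cs:
  fixes u v :: "'a \<Rightarrow> complex"
  assumes [measurable]: "u \<in> borel_measurable M" "v \<in> borel_measurable M"
    and iu: "integrable M (\<lambda>x. (cmod (u x))\<^sup>2)" and iv: "integrable M (\<lambda>x. (cmod (v x))\<^sup>2)"
  shows "integrable M (\<lambda>x. u x * v x)"
    and "cmod (\<integral>x. u x * v x \<partial>M) \<le> sqrt (\<integral>x. (cmod (u x))\<^sup>2 \<partial>M) * sqrt (\<integral>x. (cmod (v x))\<^sup>2 \<partial>M)"
proof -
  note r = cs_real[of "\<lambda>x. cmod (u x)" M "\<lambda>x. cmod (v x)", OF _ _ iu iv]
  have i: "integrable M (\<lambda>x. cmod (u x) * cmod (v x))" by (rule r) auto
  show "integrable M (\<lambda>x. u x * v x)"
    using i by (subst integrable_norm_iff[symmetric]) (auto simp: norm_mult)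
  have "cmod (\<integral>x. u x * v x \<partial>M) \<le> (\<integral>x. norm (u x * v x) \<partial>M)" by (rule integral_norm_bound)
  also have "\<dots> = (\<integral>x. cmod (u x) * cmod (v x) \<partial>M)" by (simp add: norm_mult)
  also have "\<dots> \<le> sqrt (\<integral>x. (cmod (u x))\<^sup>2 \<partial>M) * sqrt (\<integral>x. (cmod (v x))\<^sup>2 \<partial>M)" by (rule r) auto
  finally show "cmod (\<integral>x. u x * v x \<partial>M) \<le> sqrt (\<integral>x. (cmod (u x))\<^sup>2 \<partial>M) * sqrt (\<integral>x. (cmod (v x))\<^sup>2 \<partial>M)" .
qed

lemma integral_lborel_prod:
  fixes f :: "'d::euclidean_space \<Rightarrow> real \<Rightarrow> complex"
  assumes [measurable]: "\<And>b. b \<in> Basis \<Longrightarrow> f b \<in> borel_measurable borel"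
    and int: "\<And>b. b \<in> Basis \<Longrightarrow> integrable lborel (f b)"
  shows "(\<integral>x. (\<Prod>b\<in>Basis. f b (x \<bullet> b)) \<partial>(lborel::'d measure)) = (\<Prod>b\<in>Basis. (\<integral>x. f b x \<partial>lborel))"
proof -
  interpret P: finite_product_sigma_finite "\<lambda>_. lborel::real measure" "Basis::'d set"
    proof qed simp
  have m: "(\<lambda>x::'d. \<Prod>b\<in>Basis. f b (x \<bullet> b)) \<in> borel_measurable borel" by measurable
  have "(\<integral>x. (\<Prod>b\<in>Basis. f b (x \<bullet> b)) \<partial>(lborel::'d measure))
      = (\<integral>x. (\<Prod>b\<in>Basis. f b ((\<Sum>b'\<in>Basis. x b' *\<^sub>R b') \<bullet> b)) \<partial>(\<Pi>\<^sub>M b\<in>Basis. lborel))"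
    by (subst lborel_eq[where 'a='d]) (simp add: integral_distr m)
  also have "\<dots> = (\<integral>x. (\<Prod>b\<in>Basis. f b (x b)) \<partial>(\<Pi>\<^sub>M b\<in>Basis. lborel))"
    by (intro Bochner_Integration.integral_cong refl prod.cong)
      (simp_all add: inner_sum_left inner_Basis if_distrib sum.delta cong: if_cong)
  also have "\<dots> = (\<Prod>b\<in>Basis. (\<integral>x. f b x \<partial>lborel))"
    by (rule P.product_integral_prod) (auto intro: int)
  finally show ?thesis .
qed

lemma int_cis_1d:
  fixes n :: nat and j :: int
  shows "(\<integral>x. indicator {- real n .. real n} x *\<^sub>R cis (2 * pi * j * x) \<partial>lborel)
     = (if j = 0 then complex_of_real (2 * real n) else 0)"
proof (cases "j = 0")
  case True
  have "(\<integral>x. indicator {- real n .. real n} x *\<^sub>R (1::complex) \<partial>lborel)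
      = complex_of_real (real n) - complex_of_real (- real n)"
    by (rule integral_FTC_atLeastAtMost) (auto intro!: derivative_eq_intros continuous_intros
        simp: has_vector_derivative_def fun_eq_iff scaleR_conv_of_real)
  then show ?thesis using True by simp
next
  case False
  define F where "F x = cis (2 * pi * j * x) / (\<i> * (2 * pi * j))" for x
  have "(\<integral>x. indicator {- real n .. real n} x *\<^sub>R cis (2 * pi * j * x) \<partial>lborel)
      = F (real n) - F (- real n)"
  proof (rule integral_FTC_atLeastAtMost)
    fix x
    show "(F has_vector_derivative cis (2 * pi * real_of_int j * x)) (at x within {- real n..real n})"
      unfolding F_def has_vector_derivative_def
      apply (auto intro!: derivative_eq_intros simp: False)
      apply (rule ext)
      apply (simp add: False scaleR_conv_of_real field_simps)
      done
  qed (auto intro!: continuous_intros)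
  also have "\<dots> = 0"
  proof -
    have "cis (2 * pi * j * real n) = 1"
      using cis_multiple_2pi[of "real_of_int (j * int n)"] by (simp add: mult.assoc)
    moreover have "cis (2 * pi * j * (- real n)) = 1"
      using cis_multiple_2pi[of "real_of_int (- j * int n)"] by (simp add: mult.assoc)
    ultimately show ?thesis by (simp add: F_def)
  qed
  finally show ?thesis using False by simp
qed

definition bx :: "nat \<Rightarrow> 'd::euclidean_space set" where
  "bx R = {t. \<forall>b\<in>Basis. \<bar>t \<bullet> b\<bar> \<le> real R}"

lemma bx_borel[measurable]: "bx R \<in> sets borel"
  unfolding bx_def by measurable

lemma orth:
  fixes e :: "'d::euclidean_space" and j :: int
  assumes e: "e \<in> Basis"
  shows "(\<integral>t. indicator (bx R) t * cis (2 * pi * j * (e \<bullet> t)) \<partial>(lborel::'d measure))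
       = (if j = 0 then complex_of_real ((2 * real R) ^ DIM('d)) else 0)"
proof -
  define f where "f b x = indicator {- real R .. real R} x *\<^sub>R cis (2 * pi * (if b = e then j else 0) * x)"
    for b :: 'd and x :: real
  have fm[measurable]: "f b \<in> borel_measurable borel" for b unfolding f_def by measurable
  have fi: "integrable lborel (f b)" for b
    unfolding f_def by (rule borel_integrable_compact) (auto intro!: continuous_intros)
  have prodeq: "(\<Prod>b\<in>Basis. f b (t \<bullet> b)) = indicator (bx R) t * cis (2 * pi * j * (e \<bullet> t))" for t :: 'd
  proof (cases "t \<in> bx R")
    case True
    then have "(\<Prod>b\<in>Basis. f b (t \<bullet> b)) = (\<Prod>b\<in>Basis. (if b = e then cis (2 * pi * j * (t \<bullet> b)) else 1))"
      by (intro prod.cong) (auto simp: f_def bx_def abs_le_iff)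
    also have "\<dots> = cis (2 * pi * j * (t \<bullet> e))" using e by (simp add: prod.delta)
    finally show ?thesis using True by (simp add: inner_commute)
  next
    case False
    then obtain b where b: "b \<in> Basis" "\<bar>t \<bullet> b\<bar> > real R" by (auto simp: bx_def not_le)
    then have "f b (t \<bullet> b) = 0" by (auto simp: f_def abs_le_iff indicator_def)
    then have "(\<Prod>b\<in>Basis. f b (t \<bullet> b)) = 0" using b(1) by (intro prod_zero) auto
    then show ?thesis using False by simp
  qed
  have "(\<integral>t. indicator (bx R) t * cis (2 * pi * j * (e \<bullet> t)) \<partial>(lborel::'d measure))
      = (\<integral>t. (\<Prod>b\<in>Basis. f b (t \<bullet> b)) \<partial>(lborel::'d measure))"
    by (simp add: prodeq)
  also have "\<dots> = (\<Prod>b\<in>Basis. (\<integral>x. f b x \<partial>lborel))"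
    by (rule integral_lborel_prod) (auto intro: fi)
  also have "\<dots> = (\<Prod>b\<in>Basis. (if b = e \<and> j \<noteq> 0 then 0 else complex_of_real (2 * real R)))"
  proof (intro prod.cong refl)
    fix b :: 'd
    show "(\<integral>x. f b x \<partial>lborel) = (if b = e \<and> j \<noteq> 0 then 0 else complex_of_real (2 * real R))"
      using int_cis_1d[of R "if b = e then j else 0"] unfolding f_def by (auto split: if_splits)
  qed
  also have "\<dots> = (if j = 0 then complex_of_real ((2 * real R) ^ DIM('d)) else 0)"
    using e by (auto simp: prod_zero)
  finally show ?thesis .
qed

lemma bx_compact: "compact (bx R :: 'd::euclidean_space set)"
proof -
  have "bx R = cbox (- (real R *\<^sub>R One)) (real R *\<^sub>R (One::'d))"
    by (auto simp: bx_def cbox_def abs_le_iff inner_simps)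
  then show ?thesis by simp
qed

lemma bx_integrable: "integrable lborel (\<lambda>t::'d::euclidean_space. (indicator (bx R) t :: complex))"
proof -
  have "integrable lborel (\<lambda>x::'d. indicator (bx R) x *\<^sub>R (1::complex))"
    by (rule borel_integrable_compact[OF bx_compact]) simp
  moreover have "indicator (bx R) x *\<^sub>R (1::complex) = indicator (bx R) x" for x :: 'd
    by (simp add: indicator_def)
  ultimately show ?thesis by simp
qed

lemma rl_box:
  fixes F :: "'d::euclidean_space \<Rightarrow> complex" and e :: 'd
  assumes e: "e \<in> Basis"
    and Fm[measurable]: "F \<in> borel_measurable lborel"
    and Fi: "integrable lborel (\<lambda>t. (cmod (indicator (bx R) t * F t))\<^sup>2)"
  shows "(\<lambda>n::nat. \<integral>t. indicator (bx R) t * F t * cis (2 * pi * real n * (e \<bullet> t)) \<partial>lborel) \<longlonglongrightarrow> 0"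
proof -
  define W where "W t = (indicator (bx R) t :: complex)" for t :: 'd
  define E where "E n t = cis (2 * pi * real n * (e \<bullet> t))" for n :: nat and t :: 'd
  define G where "G t = W t * F t" for t
  define c where "c n = (\<integral>t. G t * E n t \<partial>lborel)" for n
  define V where "V = (2 * real R) ^ DIM('d)"
  define A where "A = (\<integral>t. (cmod (G t))\<^sup>2 \<partial>lborel)"
  have Wm[measurable]: "W \<in> borel_measurable lborel" unfolding W_def by measurable
  have Em[measurable]: "E n \<in> borel_measurable lborel" for n unfolding E_def by measurable
  have Gm[measurable]: "G \<in> borel_measurable lborel" unfolding G_def by measurable
  have WW: "W t * W t = W t" for t by (simp add: W_def indicator_def)
  have cW: "cnj (W t) = W t" for t by (simp add: W_def indicator_def)
  have nW: "cmod (W t) \<le> 1" for t by (simp add: W_def indicator_def)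
  have nE: "cmod (E n t) = 1" for n t by (simp add: E_def)
  have GW: "G t * W t = G t" for t by (simp add: G_def W_def indicator_def)
  have Wi: "integrable lborel W" unfolding W_def by (rule bx_integrable)
  have Gi2: "integrable lborel (\<lambda>t. (cmod (G t))\<^sup>2)" using Fi by (simp add: G_def W_def)
  have Wi2: "integrable lborel (\<lambda>t. (cmod (W t))\<^sup>2)"
  proof -
    have "(cmod (W t))\<^sup>2 = cmod (W t)" for t by (simp add: W_def indicator_def)
    then show ?thesis using Wi by simp
  qed
  have GWi: "integrable lborel (\<lambda>t. G t * W t)" by (rule cs(1)[OF Gm Wm Gi2 Wi2])
  have GEi: "integrable lborel (\<lambda>t. G t * E n t)" for n
  proof (rule Bochner_Integration.integrable_bound[OF GWi])
    show "AE t in lborel. norm (G t * E n t) \<le> norm (G t * W t)"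
      by (intro AE_I2) (simp add: norm_mult nE GW)
  qed (unfold G_def W_def E_def; measurable)
  have WEi: "integrable lborel (\<lambda>t. W t * (E n t * cnj (E m t)))" for n m
  proof (rule Bochner_Integration.integrable_bound[OF Wi])
    show "AE t in lborel. norm (W t * (E n t * cnj (E m t))) \<le> norm (W t)"
      by (intro AE_I2) (simp add: norm_mult nE)
  qed (unfold W_def E_def cis_cnj; measurable)
  have ortho: "(\<integral>t. W t * (E n t * cnj (E m t)) \<partial>lborel) = (if n = m then complex_of_real V else 0)" for n m
  proof -
    have "(\<integral>t. W t * (E n t * cnj (E m t)) \<partial>lborel)
        = (\<integral>t. indicator (bx R) t * cis (2 * pi * real_of_int (int n - int m) * (e \<bullet> t)) \<partial>lborel)"
      by (intro Bochner_Integration.integral_cong refl)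
        (simp add: W_def E_def cis_cnj cis_mult algebra_simps)
    also have "\<dots> = (if n = m then complex_of_real V else 0)"
      by (subst orth[OF e]) (simp add: V_def)
    finally show ?thesis .
  qed
  have bound: "(\<Sum>n<N. (cmod (c n))\<^sup>2) \<le> A * V" for N
  proof -
    define S where "S t = W t * (\<Sum>n<N. cnj (c n) * E n t)" for t
    define \<Sigma> where "\<Sigma> = (\<Sum>n<N. (cmod (c n))\<^sup>2)"
    have Sm[measurable]: "S \<in> borel_measurable lborel" unfolding S_def by measurable
    have S0: "\<Sigma> \<ge> 0" unfolding \<Sigma>_def by (intro sum_nonneg) simp
    have GS: "G t * S t = (\<Sum>n<N. cnj (c n) * (G t * E n t))" for t
    proof -
      have "G t * S t = (G t * W t) * (\<Sum>n<N. cnj (c n) * E n t)" by (simp add: S_def mult.assoc)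
      also have "\<dots> = G t * (\<Sum>n<N. cnj (c n) * E n t)" by (simp only: GW)
      also have "\<dots> = (\<Sum>n<N. cnj (c n) * (G t * E n t))" by (simp add: sum_distrib_left mult.left_commute)
      finally show ?thesis .
    qed
    have "(\<integral>t. G t * S t \<partial>lborel) = (\<integral>t. (\<Sum>n<N. cnj (c n) * (G t * E n t)) \<partial>lborel)"
      by (simp only: GS)
    also have "\<dots> = (\<Sum>n<N. cnj (c n) * c n)"
      using GEi by (simp add: c_def)
    also have "\<dots> = complex_of_real \<Sigma>"
      unfolding \<Sigma>_def of_real_sum by (intro sum.cong refl) (subst complex_norm_square, simp add: mult.commute)
    finally have I1: "(\<integral>t. G t * S t \<partial>lborel) = complex_of_real \<Sigma>" .
    have SS: "S t * cnj (S t) = (\<Sum>n<N. \<Sum>m<N. (cnj (c n) * c m) * (W t * (E n t * cnj (E m t))))" for t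
    proof -
      have "S t * cnj (S t) = (W t * cnj (W t)) * ((\<Sum>n<N. cnj (c n) * E n t) * (\<Sum>m<N. c m * cnj (E m t)))"
        by (simp add: S_def cnj_sum)
      also have "\<dots> = W t * (\<Sum>n<N. \<Sum>m<N. (cnj (c n) * E n t) * (c m * cnj (E m t)))"
        by (simp add: cW WW sum_product)
      also have "\<dots> = (\<Sum>n<N. \<Sum>m<N. (cnj (c n) * c m) * (W t * (E n t * cnj (E m t))))"
        by (simp add: sum_distrib_left algebra_simps)
      finally show ?thesis .
    qed
    have "complex_of_real (\<integral>t. (cmod (S t))\<^sup>2 \<partial>lborel) = (\<integral>t. S t * cnj (S t) \<partial>lborel)"
      by (subst integral_complex_of_real[symmetric]) (intro Bochner_Integration.integral_cong refl; subst complex_norm_square; simp)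
    also have "\<dots> = (\<Sum>n<N. \<Sum>m<N. (cnj (c n) * c m) * (\<integral>t. W t * (E n t * cnj (E m t)) \<partial>lborel))"
      unfolding SS using WEi by simp
    also have "\<dots> = (\<Sum>n<N. cnj (c n) * c n * complex_of_real V)"
      by (simp add: ortho if_distrib sum.delta cong: if_cong)
    also have "\<dots> = complex_of_real (V * \<Sigma>)"
      unfolding \<Sigma>_def of_real_mult of_real_sum sum_distrib_left
      by (intro sum.cong refl) (subst complex_norm_square, simp add: mult.commute)
    finally have I2: "(\<integral>t. (cmod (S t))\<^sup>2 \<partial>lborel) = V * \<Sigma>" by (simp only: of_real_eq_iff)
    have Si2: "integrable lborel (\<lambda>t. (cmod (S t))\<^sup>2)"
    proof -
      have "integrable lborel (\<lambda>t. S t * cnj (S t))" unfolding SS using WEi by simp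
      then have "integrable lborel (\<lambda>t. Re (S t * cnj (S t)))" by (rule integrable_Re)
      moreover have "Re (S t * cnj (S t)) = (cmod (S t))\<^sup>2" for t
        using cmod_power2[of "S t"] by (simp add: power2_eq_square)
      ultimately show ?thesis by simp
    qed
    have "\<Sigma> = cmod (\<integral>t. G t * S t \<partial>lborel)" using I1 S0 by simp
    also have "\<dots> \<le> sqrt A * sqrt (V * \<Sigma>)"
      using cs(2)[OF Gm Sm Gi2 Si2] by (simp add: A_def I2)
    finally have le: "\<Sigma> \<le> sqrt A * sqrt (V * \<Sigma>)" .
    have A0: "A \<ge> 0" "V \<ge> 0" by (simp_all add: A_def V_def)
    show ?thesis
    proof (cases "\<Sigma> = 0")
      case True then show ?thesis using A0 by (simp add: \<Sigma>_def[symmetric])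
    next
      case False
      then have "\<Sigma> > 0" using S0 by simp
      have "\<Sigma>\<^sup>2 \<le> (sqrt A * sqrt (V * \<Sigma>))\<^sup>2"
        using le S0 by (intro power_mono) auto
      also have "\<dots> = A * V * \<Sigma>" using A0 S0 by (simp add: power_mult_distrib real_sqrt_mult)
      finally have "\<Sigma> * \<Sigma> \<le> (A * V) * \<Sigma>" by (simp add: power2_eq_square)
      then have "\<Sigma> \<le> A * V" using \<open>\<Sigma> > 0\<close> by simp
      then show ?thesis by (simp add: \<Sigma>_def)
    qed
  qed
  have "summable (\<lambda>n. (cmod (c n))\<^sup>2)"
    by (rule bounded_imp_summable[where B="A * V"]) (use bound[of "Suc _"] in \<open>auto simp: lessThan_Suc_atMost\<close>)
  then have "(\<lambda>n. (cmod (c n))\<^sup>2) \<longlonglongrightarrow> 0" by (rule summable_LIMSEQ_zero)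
  then have "(\<lambda>n. sqrt ((cmod (c n))\<^sup>2)) \<longlonglongrightarrow> sqrt 0" by (intro tendsto_intros)
  then have "(\<lambda>n. norm (c n)) \<longlonglongrightarrow> 0" by simp
  then have "c \<longlonglongrightarrow> 0" by (simp add: tendsto_norm_zero_iff)
  then show ?thesis unfolding c_def G_def W_def E_def .
qed

lemma L2_cs:
  assumes "L2 u" "L2 v"
  shows "integrable lborel (\<lambda>t. u t * v t)"
    and "cmod (\<integral>t. u t * v t \<partial>lborel) \<le> sqrt (\<integral>t. (cmod (u t))\<^sup>2 \<partial>lborel) * sqrt (\<integral>t. (cmod (v t))\<^sup>2 \<partial>lborel)"
  using cs[of u lborel v] assms by (auto simp: L2_def)

lemma L2_cnj: assumes "L2 u" shows "L2 (\<lambda>t. cnj (u t))"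
proof -
  have [measurable]: "u \<in> borel_measurable lborel" using assms by (simp add: L2_def)
  show ?thesis unfolding L2_def by (intro conjI) (measurable, use assms in \<open>simp add: L2_def\<close>)
qed

lemma in_bx:
  fixes t :: "'d::euclidean_space"
  assumes "norm t \<le> real R" shows "t \<in> bx R"
  using assms Basis_le_norm by (auto simp: bx_def intro: order_trans)

lemma rl:
  fixes g h :: "'d::euclidean_space \<Rightarrow> complex" and e :: 'd
  assumes e: "e \<in> Basis" and g: "L2 g" and h: "L2 h"
  shows "(\<lambda>n::nat. \<integral>t. cis (2 * pi * real n * (e \<bullet> t)) * (g t * cnj (h t)) \<partial>lborel) \<longlonglongrightarrow> 0"
proof -
  have gm[measurable]: "g \<in> borel_measurable lborel" and hm[measurable]: "h \<in> borel_measurable lborel"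
    using g h by (auto simp: L2_def)
  have hi2: "integrable lborel (\<lambda>t. (cmod (h t))\<^sup>2)" using h by (simp add: L2_def)
  define P where "P t = g t * cnj (h t)" for t
  have Pm[measurable]: "P \<in> borel_measurable lborel" unfolding P_def by measurable
  have Pi: "integrable lborel P" unfolding P_def by (rule L2_cs(1)[OF g L2_cnj[OF h]])
  define K where "K R = bx R \<inter> {t. cmod (g t) \<le> real R}" for R :: nat
  have Km[measurable]: "K R \<in> sets lborel" for R unfolding K_def by measurable
  define \<rho> where "\<rho> R t = (1 - indicator (K R) t) * cmod (P t)" for R :: nat and t
  have \<rho>lim: "(\<lambda>R. \<integral>t. \<rho> R t \<partial>lborel) \<longlonglongrightarrow> (\<integral>t. (0::real) \<partial>(lborel::'d measure))"
  proof (rule Bochner_Integration.integral_dominated_convergence[where w="\<lambda>t. cmod (P t)"])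
    show "integrable lborel (\<lambda>t. cmod (P t))" using Pi by simp
    show "AE t in lborel. (\<lambda>R. \<rho> R t) \<longlonglongrightarrow> 0"
    proof (rule AE_I2)
      fix t :: 'd
      have "eventually (\<lambda>R. \<rho> R t = 0) sequentially"
      proof (rule eventually_sequentiallyI[of "nat \<lceil>max (norm t) (cmod (g t))\<rceil>"])
        fix R assume "nat \<lceil>max (norm t) (cmod (g t))\<rceil> \<le> R"
        then have "max (norm t) (cmod (g t)) \<le> real R" by linarith
        then have "t \<in> K R" using in_bx[of t R] by (auto simp: K_def)
        then show "\<rho> R t = 0" by (simp add: \<rho>_def)
      qed
      then show "(\<lambda>R. \<rho> R t) \<longlonglongrightarrow> 0" by (rule tendsto_eventually)
    qed
    show "AE t in lborel. norm (\<rho> R t) \<le> cmod (P t)" for R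
      by (intro AE_I2) (auto simp: \<rho>_def indicator_def)
  qed (auto simp: \<rho>_def)
  show ?thesis
  proof (rule LIMSEQ_I)
    fix \<epsilon> :: real assume "\<epsilon> > 0"
    from \<rho>lim have "eventually (\<lambda>R. \<integral>t. \<rho> R t \<partial>lborel < \<epsilon>/2) sequentially"
      using \<open>\<epsilon> > 0\<close> by (intro order_tendstoD(2)) auto
    then obtain R where R: "(\<integral>t. \<rho> R t \<partial>lborel) < \<epsilon>/2" by (auto simp: eventually_sequentially)
    define F where "F t = indicator {t. cmod (g t) \<le> real R} t * P t" for t
    have Fm[measurable]: "F \<in> borel_measurable lborel" unfolding F_def by measurable
    have Fi: "integrable lborel (\<lambda>t. (cmod (indicator (bx R) t * F t))\<^sup>2)"
    proof (rule Bochner_Integration.integrable_bound[where f="\<lambda>t. (real R)\<^sup>2 * (cmod (h t))\<^sup>2"])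
      show "integrable lborel (\<lambda>t. (real R)\<^sup>2 * (cmod (h t))\<^sup>2)" using hi2 by simp
      show "AE t in lborel. norm ((cmod (indicator (bx R) t * F t))\<^sup>2) \<le> norm ((real R)\<^sup>2 * (cmod (h t))\<^sup>2)"
      proof (rule AE_I2)
        fix t
        have "cmod (indicator (bx R) t * F t) \<le> real R * cmod (h t)"
          by (auto simp: F_def P_def indicator_def norm_mult intro!: mult_right_mono)
        then have "(cmod (indicator (bx R) t * F t))\<^sup>2 \<le> (real R * cmod (h t))\<^sup>2"
          by (intro power_mono) auto
        then show "norm ((cmod (indicator (bx R) t * F t))\<^sup>2) \<le> norm ((real R)\<^sup>2 * (cmod (h t))\<^sup>2)"
          by (simp add: power_mult_distrib)
      qed
    qed measurable
    from rl_box[OF e Fm Fi] \<open>\<epsilon> > 0\<close>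
    have "eventually (\<lambda>n. cmod (\<integral>t. indicator (bx R) t * F t * cis (2 * pi * real n * (e \<bullet> t)) \<partial>lborel) < \<epsilon>/2) sequentially"
      using tendsto_norm[OF rl_box[OF e Fm Fi], THEN order_tendstoD(2), of "\<epsilon>/2"] by simp
    then obtain N where N: "\<And>n. n \<ge> N \<Longrightarrow>
        cmod (\<integral>t. indicator (bx R) t * F t * cis (2 * pi * real n * (e \<bullet> t)) \<partial>lborel) < \<epsilon>/2"
      by (auto simp: eventually_sequentially)
    show "\<exists>N. \<forall>n\<ge>N. norm ((\<integral>t. cis (2 * pi * real n * (e \<bullet> t)) * (g t * cnj (h t)) \<partial>lborel) - 0) < \<epsilon>"
    proof (intro exI allI impI)
      fix n assume "n \<ge> N"
      define X where "X t = indicator (bx R) t * F t * cis (2 * pi * real n * (e \<bullet> t))" for t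
      define Y where "Y t = cis (2 * pi * real n * (e \<bullet> t)) * P t * (1 - indicator (K R) t)" for t
      have XY: "cis (2 * pi * real n * (e \<bullet> t)) * (g t * cnj (h t)) = X t + Y t" for t
        by (simp add: X_def Y_def F_def P_def K_def indicator_def algebra_simps)
      have Xi: "integrable lborel X"
      proof (rule Bochner_Integration.integrable_bound[OF Pi])
        show "AE t in lborel. norm (X t) \<le> norm (P t)"
          by (intro AE_I2) (auto simp: X_def F_def indicator_def norm_mult)
      qed (unfold X_def F_def P_def; measurable)
      have Yi: "integrable lborel Y"
      proof (rule Bochner_Integration.integrable_bound[OF Pi])
        show "AE t in lborel. norm (Y t) \<le> norm (P t)"
          by (intro AE_I2) (auto simp: Y_def indicator_def norm_mult)
      qed (unfold Y_def P_def; measurable)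
      have "(\<integral>t. cis (2 * pi * real n * (e \<bullet> t)) * (g t * cnj (h t)) \<partial>lborel) = (\<integral>t. X t \<partial>lborel) + (\<integral>t. Y t \<partial>lborel)"
        unfolding XY using Xi Yi by simp
      moreover have "cmod (\<integral>t. Y t \<partial>lborel) \<le> (\<integral>t. \<rho> R t \<partial>lborel)"
      proof -
        have "cmod (\<integral>t. Y t \<partial>lborel) \<le> (\<integral>t. norm (Y t) \<partial>lborel)" by (rule integral_norm_bound)
        also have "\<dots> = (\<integral>t. \<rho> R t \<partial>lborel)"
          by (intro Bochner_Integration.integral_cong refl) (simp add: Y_def \<rho>_def norm_mult indicator_def)
        finally show ?thesis .
      qed
      moreover have "cmod (\<integral>t. X t \<partial>lborel) < \<epsilon>/2" using N[OF \<open>n \<ge> N\<close>] by (simp add: X_def)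
      ultimately show "norm ((\<integral>t. cis (2 * pi * real n * (e \<bullet> t)) * (g t * cnj (h t)) \<partial>lborel) - 0) < \<epsilon>"
        using R norm_triangle_ineq[of "\<integral>t. X t \<partial>lborel" "\<integral>t. Y t \<partial>lborel"] by simp
    qed
  qed
qed

lemma lborel_integral_translate:
  fixes g :: "'a::euclidean_space \<Rightarrow> complex"
  shows "(\<integral>z. g z \<partial>lborel) = (\<integral>z. g (c + z) \<partial>lborel)"
proof (cases "g \<in> borel_measurable borel")
  case True
  have "(\<integral>z. g z \<partial>lborel) = (\<integral>z. g z \<partial>(distr lborel borel ((+) c)))"
    by (simp add: lborel_distr_plus)
  also have "\<dots> = (\<integral>z. g (c + z) \<partial>lborel)"
    by (rule integral_distr) (auto simp: True)
  finally show ?thesis .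
next
  case False
  have nm: "(\<lambda>z. g (c + z)) \<notin> borel_measurable borel"
  proof
    assume "(\<lambda>z. g (c + z)) \<in> borel_measurable borel"
    then have "(\<lambda>z. g (c + (- c + z))) \<in> borel_measurable borel"
      by (rule measurable_compose[rotated]) simp
    then show False using False by simp
  qed
  have "\<not> integrable lborel g" using False by (auto dest: borel_measurable_integrable)
  moreover have "\<not> integrable lborel (\<lambda>z. g (c + z))" using nm by (auto dest: borel_measurable_integrable)
  ultimately show ?thesis by (simp add: not_integrable_integral_eq)
qed

definition md :: "'d::euclidean_space \<Rightarrow> ('d \<Rightarrow> complex) \<Rightarrow> 'd \<Rightarrow> complex" where
  "md a f t = cis (2 * pi * (a \<bullet> t)) * f t"

lemma cmod_md[simp]: "cmod (md a f t) = cmod (f t)"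
  by (simp add: md_def norm_mult)

lemma L2_md: assumes "L2 f" shows "L2 (md a f)"
proof -
  have [measurable]: "f \<in> borel_measurable lborel" using assms by (simp add: L2_def)
  have "md a f \<in> borel_measurable lborel" unfolding md_def by measurable
  moreover have "integrable lborel (\<lambda>t. (cmod (md a f t))\<^sup>2)" using assms by (simp add: L2_def)
  ultimately show ?thesis by (simp add: L2_def)
qed

lemma L2_diff: assumes "L2 u" "L2 v" shows "L2 (\<lambda>t. u t - v t)"
proof -
  have [measurable]: "u \<in> borel_measurable lborel" "v \<in> borel_measurable lborel" using assms by (auto simp: L2_def)
  have i: "integrable lborel (\<lambda>t. 2 * (cmod (u t))\<^sup>2 + 2 * (cmod (v t))\<^sup>2)" using assms by (auto simp: L2_def)
  have "integrable lborel (\<lambda>t. (cmod (u t - v t))\<^sup>2)"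
  proof (rule Bochner_Integration.integrable_bound[OF i])
    show "AE t in lborel. norm ((cmod (u t - v t))\<^sup>2) \<le> norm (2 * (cmod (u t))\<^sup>2 + 2 * (cmod (v t))\<^sup>2)"
    proof (rule AE_I2)
      fix t
      have "cmod (u t - v t) \<le> cmod (u t) + cmod (v t)" by (rule norm_triangle_ineq4)
      then have "(cmod (u t - v t))\<^sup>2 \<le> (cmod (u t) + cmod (v t))\<^sup>2" by (intro power_mono) auto
      also have "\<dots> \<le> 2 * (cmod (u t))\<^sup>2 + 2 * (cmod (v t))\<^sup>2"
        using sum_squares_bound[of "cmod (u t)" "cmod (v t)"] by (simp add: power2_sum)
      finally show "norm ((cmod (u t - v t))\<^sup>2) \<le> norm (2 * (cmod (u t))\<^sup>2 + 2 * (cmod (v t))\<^sup>2)" by simp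
    qed
  qed measurable
  moreover have "(\<lambda>t. u t - v t) \<in> borel_measurable lborel" by measurable
  ultimately show ?thesis by (simp add: L2_def)
qed

lemma stft_md: "stft \<phi> (md a \<psi>) z = stft \<phi> \<psi> (z - (0, a))"
  unfolding stft_def md_def
  by (intro Bochner_Integration.integral_cong refl)
     (simp add: cis_mult inner_diff_left algebra_simps)

lemma mconv_md: "mconv M (stft \<phi> (md a \<psi>)) z = mconv M (stft \<phi> \<psi>) (z - (0, a))"
  unfolding mconv_def stft_md by (simp only: Groups.diff_right_commute[of z "(0, a)"])

lemma l2inner_tfshift: "l2inner (tfshift ((0, a) + z) \<phi>) f = l2inner (tfshift z \<phi>) (md (- a) f)"
  unfolding l2inner_def tfshift_def md_def
  by (intro Bochner_Integration.integral_cong refl)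
     (simp add: cis_cnj cis_mult inner_add_left algebra_simps)

lemma l2inner_md: "l2inner u (md (- a) f) = l2inner (md a u) f"
  unfolding l2inner_def md_def
  by (intro Bochner_Integration.integral_cong refl) (simp add: cis_cnj algebra_simps)

lemma cov:
  assumes B: "is_Bmu M \<phi> T" and \<psi>: "L2 \<psi>"
  shows "AE t in lborel. T (md a \<psi>) t = md a (T \<psi>) t"
proof -
  have T1: "L2 (T (md a \<psi>))" using B L2_md[OF \<psi>] by (simp add: is_Bmu_def)
  have "L2 (T \<psi>)" using B \<psi> by (simp add: is_Bmu_def)
  then have T2: "L2 (md a (T \<psi>))" by (rule L2_md)
  have eq: "l2inner (T (md a \<psi>)) f = l2inner (md a (T \<psi>)) f" if f: "L2 f" for f
  proof -
    have "l2inner (T (md a \<psi>)) f = (\<integral>z. mconv M (stft \<phi> \<psi>) (z - (0, a)) * l2inner (tfshift z \<phi>) f \<partial>lborel)"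
      using B L2_md[OF \<psi>] f by (simp add: is_Bmu_def mconv_md)
    also have "\<dots> = (\<integral>z. mconv M (stft \<phi> \<psi>) z * l2inner (tfshift ((0, a) + z) \<phi>) f \<partial>lborel)"
      by (subst lborel_integral_translate[where c="(0, a)"]) simp
    also have "\<dots> = (\<integral>z. mconv M (stft \<phi> \<psi>) z * l2inner (tfshift z \<phi>) (md (- a) f) \<partial>lborel)"
      by (simp add: l2inner_tfshift)
    also have "\<dots> = l2inner (T \<psi>) (md (- a) f)"
      using B \<psi> L2_md[OF f] by (simp add: is_Bmu_def)
    also have "\<dots> = l2inner (md a (T \<psi>)) f" by (rule l2inner_md)
    finally show ?thesis .
  qed
  define D where "D t = T (md a \<psi>) t - md a (T \<psi>) t" for t
  have D: "L2 D" unfolding D_def by (rule L2_diff[OF T1 T2])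
  have Dm[measurable]: "D \<in> borel_measurable lborel" using D by (simp add: L2_def)
  have i1: "integrable lborel (\<lambda>t. T (md a \<psi>) t * cnj (D t))" by (rule L2_cs(1)[OF T1 L2_cnj[OF D]])
  have i2: "integrable lborel (\<lambda>t. md a (T \<psi>) t * cnj (D t))" by (rule L2_cs(1)[OF T2 L2_cnj[OF D]])
  have "complex_of_real (\<integral>t. (cmod (D t))\<^sup>2 \<partial>lborel) = (\<integral>t. D t * cnj (D t) \<partial>lborel)"
    by (subst integral_complex_of_real[symmetric]) (intro Bochner_Integration.integral_cong refl; subst complex_norm_square; simp)
  also have "\<dots> = (\<integral>t. T (md a \<psi>) t * cnj (D t) - md a (T \<psi>) t * cnj (D t) \<partial>lborel)"
    by (intro Bochner_Integration.integral_cong refl) (simp add: D_def algebra_simps)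
  also have "\<dots> = l2inner (T (md a \<psi>)) D - l2inner (md a (T \<psi>)) D"
    using i1 i2 by (simp add: l2inner_def)
  also have "\<dots> = 0" using eq[OF D] by simp
  finally have "(\<integral>t. (cmod (D t))\<^sup>2 \<partial>lborel) = 0" by simp
  then have "AE t in lborel. (cmod (D t))\<^sup>2 = 0"
    using D by (subst integral_nonneg_eq_0_iff_AE[symmetric]) (auto simp: L2_def)
  then show ?thesis by eventually_elim (simp add: D_def)
qed

theorem theorem4p11:
  fixes M :: "nat \<Rightarrow> ('d::euclidean_space \<times> 'd) measure"
    and \<phi> :: "'d \<Rightarrow> complex"
    and T :: "('d \<Rightarrow> complex) \<Rightarrow> ('d \<Rightarrow> complex)"
  assumes "cmeasure M"
    and "M1 \<phi>"
    and "is_Bmu M \<phi> T"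
    and "\<exists>\<psi>. L2 \<psi> \<and> \<not> (AE t in lborel. T \<psi> t = 0)"
  shows "\<not> compact_op T"
proof
  assume C: "compact_op T"
  note B = assms(3)
  obtain \<psi>0 where \<psi>0: "L2 \<psi>0" and nz: "\<not> (AE t in lborel. T \<psi>0 t = 0)" using assms(4) by blast
  obtain e :: 'd where e: "e \<in> Basis" using nonempty_Basis by blast
  define g where "g = T \<psi>0"
  have g: "L2 g" using B \<psi>0 by (simp add: is_Bmu_def g_def)
  have gm[measurable]: "g \<in> borel_measurable lborel" using g by (simp add: L2_def)
  define \<psi>s where "\<psi>s n = md (real n *\<^sub>R e) \<psi>0" for n :: nat
  have L2s: "\<forall>n. L2 (\<psi>s n)" unfolding \<psi>s_def using L2_md[OF \<psi>0] by blast
  have "l2norm (\<psi>s n) = l2norm \<psi>0" for n by (simp add: \<psi>s_def l2norm_def)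
  then have "range (\<lambda>n. l2norm (\<psi>s n)) \<subseteq> {l2norm \<psi>0}" by auto
  then have bd: "bounded (range (\<lambda>n. l2norm (\<psi>s n)))" by (rule bounded_subset[rotated]) simp
  from C L2s bd obtain r h where r: "strict_mono r" and h: "L2 h"
    and lim: "(\<lambda>n. l2norm (\<lambda>t. T (\<psi>s (r n)) t - h t)) \<longlonglongrightarrow> 0"
    unfolding compact_op_def by blast
  have hm[measurable]: "h \<in> borel_measurable lborel" using h by (simp add: L2_def)
  define u where "u n = md (real (r n) *\<^sub>R e) g" for n
  have u: "L2 (u n)" for n unfolding u_def by (rule L2_md[OF g])
  have um[measurable]: "u n \<in> borel_measurable lborel" for n using u[of n] by (simp add: L2_def)
  define a where "a n = (\<integral>t. (cmod (u n t - h t))\<^sup>2 \<partial>lborel)" for n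
  have a0: "a n \<ge> 0" for n by (simp add: a_def)
  have "l2norm (\<lambda>t. T (\<psi>s (r n)) t - h t) = sqrt (a n)" for n
  proof -
    have TL: "L2 (T (\<psi>s (r n)))" using B L2s by (simp add: is_Bmu_def)
    then have [measurable]: "T (\<psi>s (r n)) \<in> borel_measurable lborel" by (simp add: L2_def)
    have "AE t in lborel. T (\<psi>s (r n)) t = u n t"
      using cov[OF B \<psi>0, of "real (r n) *\<^sub>R e"] by (simp add: \<psi>s_def u_def g_def)
    then have "(\<integral>t. (cmod (T (\<psi>s (r n)) t - h t))\<^sup>2 \<partial>lborel) = a n"
      unfolding a_def by (intro integral_cong_AE) (measurable, auto elim: AE_mp)
    then show ?thesis by (simp add: l2norm_def)
  qed
  with lim have "(\<lambda>n. sqrt (a n)) \<longlonglongrightarrow> 0" by simp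
  then have "(\<lambda>n. (sqrt (a n))\<^sup>2) \<longlonglongrightarrow> 0\<^sup>2" by (intro tendsto_intros)
  then have alim: "a \<longlonglongrightarrow> 0" using a0 by simp
  define H where "H = (\<integral>t. (cmod (h t))\<^sup>2 \<partial>lborel)"
  have inner_lim: "(\<lambda>n. \<integral>t. u n t * cnj (h t) \<partial>lborel) \<longlonglongrightarrow> (\<integral>t. h t * cnj (h t) \<partial>lborel)"
  proof -
    have d: "L2 (\<lambda>t. u n t - h t)" for n by (rule L2_diff[OF u h])
    have bnd: "cmod ((\<integral>t. u n t * cnj (h t) \<partial>lborel) - (\<integral>t. h t * cnj (h t) \<partial>lborel)) \<le> sqrt (a n) * sqrt H" for n
    proof -
      have i1: "integrable lborel (\<lambda>t. u n t * cnj (h t))" by (rule L2_cs(1)[OF u L2_cnj[OF h]])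
      have i2: "integrable lborel (\<lambda>t. h t * cnj (h t))" by (rule L2_cs(1)[OF h L2_cnj[OF h]])
      have "(\<integral>t. u n t * cnj (h t) \<partial>lborel) - (\<integral>t. h t * cnj (h t) \<partial>lborel)
          = (\<integral>t. (u n t - h t) * cnj (h t) \<partial>lborel)"
        using i1 i2 by (simp add: algebra_simps)
      also have "cmod \<dots> \<le> sqrt (a n) * sqrt H"
        using L2_cs(2)[OF d L2_cnj[OF h]] by (simp add: a_def H_def)
      finally show ?thesis .
    qed
    have "(\<lambda>n. sqrt (a n) * sqrt H) \<longlonglongrightarrow> sqrt 0 * sqrt H" by (intro tendsto_intros alim)
    then have "(\<lambda>n. sqrt (a n) * sqrt H) \<longlonglongrightarrow> 0" by simp
    then have "(\<lambda>n. (\<integral>t. u n t * cnj (h t) \<partial>lborel) - (\<integral>t. h t * cnj (h t) \<partial>lborel)) \<longlonglongrightarrow> 0"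
      by (rule Lim_null_comparison[rotated]) (simp add: bnd)
    then show ?thesis by (simp add: LIM_zero_iff)
  qed
  have "(\<lambda>n. \<integral>t. cis (2 * pi * real n * (e \<bullet> t)) * (g t * cnj (h t)) \<partial>lborel) \<longlonglongrightarrow> 0"
    by (rule rl[OF e g h])
  from LIMSEQ_subseq_LIMSEQ[OF this r]
  have "(\<lambda>n. \<integral>t. u n t * cnj (h t) \<partial>lborel) \<longlonglongrightarrow> 0"
    by (simp add: o_def u_def md_def mult.assoc)
  with inner_lim have hh: "(\<integral>t. h t * cnj (h t) \<partial>lborel) = 0" by (rule LIMSEQ_unique)
  have "complex_of_real H = (\<integral>t. h t * cnj (h t) \<partial>lborel)"
    unfolding H_def
    by (subst integral_complex_of_real[symmetric]) (intro Bochner_Integration.integral_cong refl; subst complex_norm_square; simp)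
  with hh have "H = 0" by simp
  then have h0: "AE t in lborel. (cmod (h t))\<^sup>2 = 0"
    using h unfolding H_def by (subst integral_nonneg_eq_0_iff_AE[symmetric]) (auto simp: L2_def)
  have aeq: "a n = (\<integral>t. (cmod (g t))\<^sup>2 \<partial>lborel)" for n
  proof -
    have "a n = (\<integral>t. (cmod (u n t))\<^sup>2 \<partial>lborel)"
      unfolding a_def by (intro integral_cong_AE) (measurable, use h0 in \<open>auto elim: AE_mp\<close>)
    then show ?thesis by (simp add: u_def)
  qed
  have aeq': "a = (\<lambda>n. \<integral>t. (cmod (g t))\<^sup>2 \<partial>lborel)" by (rule ext) (rule aeq)
  have "(\<lambda>n. \<integral>t. (cmod (g t))\<^sup>2 \<partial>lborel) \<longlonglongrightarrow> 0" using alim unfolding aeq' .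
  then have "(\<integral>t. (cmod (g t))\<^sup>2 \<partial>lborel) = 0" by (simp add: LIMSEQ_const_iff)
  then have "AE t in lborel. (cmod (g t))\<^sup>2 = 0"
    using g by (subst integral_nonneg_eq_0_iff_AE[symmetric]) (auto simp: L2_def)
  then have "AE t in lborel. T \<psi>0 t = 0" by eventually_elim (simp add: g_def)
  with nz show False by simp
qed

end
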